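(* Let $\mathcal{A}$ be the Weyl arrangement of type $A_3$, realized in $\mathbb{K}^3$ as the six hyperplanes $x=0$, $y=0$, $z=0$, $x=y$, $y=z$, $x=z$. Let $m$ be a multiplicity on $\mathcal{A}$ such that $(\mathcal{A},m)$ is unbalanced. Then the freeness of $(\mathcal{A},m)$ depends only on $L(\mathcal{A})$ together with the values $m(H)$, $H\in\mathcal{A}$. Precisely: let $(\mathcal{A}',m')$ be a multiarrangement in $\mathbb{K}^3$ and $\varphi:\mathcal{A}\to\mathcal{A}'$ a bijection such that $m'(\varphi(H))=m(H)$ for all $H$ and $\operatorname{codim}\bigcap_{H\in\mathcal{B}}H=\operatorname{codim}\bigcap_{H\in\mathcal{B}}\varphi(H)$ for every subset $\mathcal{B}\subseteq\mathcal{A}$. Then $(\mathcal{A},m)$ is free if and only if $(\mathcal{A}',m')$ is free.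
   Context: Let $\mathbb{K}$ be a field. A multiarrangement $(\mathcal{A},m)$ in $V=\mathbb{K}^3$ is a finite set $\mathcal{A}$ of linear hyperplanes, each $H$ with a fixed defining linear form $\alpha_H$, together with a multiplicity $m:\mathcal{A}\to\mathbb{Z}_{>0}$; write $|m|=\sum_H m(H)$. $L(\mathcal{A})$ is the set of intersections of subsets of $\mathcal{A}$. $(\mathcal{A},m)$ is free if $D(\mathcal{A},m)=\{\theta\in\mathrm{Der}_{\mathbb{K}}(\mathbb{K}[x,y,z]):\theta(\alpha_H)\in\alpha_H^{m(H)}\mathbb{K}[x,y,z]\ \forall H\}$ is a free module. A hyperplane $H_0$ is heavy if $2m(H_0)\ge|m|$, and $(\mathcal{A},m)$ is unbalanced if it has a heavy hyperplane. *)

theory Defs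
  imports "HOL-Computational_Algebra.Polynomial" "HOL-Library.Product_Plus"
begin

text \<open>Vectors of K^3 and linear forms on K^3 are both represented as triples.
  A linear form (a,b,c) stands for a x + b y + c z.\<close>

type_synonym 'k vec3 = "'k \<times> 'k \<times> 'k"

definition scale3 :: "'k::field \<Rightarrow> 'k vec3 \<Rightarrow> 'k vec3" where
  "scale3 c v = (c * fst v, c * fst (snd v), c * snd (snd v))"

definition hyp :: "'k::field vec3 \<Rightarrow> 'k vec3 set" where
  "hyp \<alpha> = {v. fst \<alpha> * fst v + fst (snd \<alpha>) * fst (snd v) + snd (snd \<alpha>) * snd (snd v) = 0}"

definition codim3 :: "'k::field vec3 set \<Rightarrow> nat" where
  "codim3 W = 3 - vector_space.dim scale3 W"

text \<open>S = K[x,y,z], realised as ((K[x])[y])[z].\<close>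
type_synonym 'k S = "'k poly poly poly"

definition constS :: "'k::field \<Rightarrow> 'k S" where
  "constS a = [:[:[:a:]:]:]"

definition varX :: "'k::field S" where "varX = [:[:[:0, 1:]:]:]"
definition varY :: "'k::field S" where "varY = [:[:0, 1:]:]"
definition varZ :: "'k::field S" where "varZ = [:0, 1:]"

definition formS :: "'k::field vec3 \<Rightarrow> 'k S" where
  "formS \<alpha> = constS (fst \<alpha>) * varX + constS (fst (snd \<alpha>)) * varY + constS (snd (snd \<alpha>)) * varZ"

text \<open>A K-linear derivation of S is theta = f1 d/dx + f2 d/dy + f3 d/dz, identified with
  the triple (f1,f2,f3) in S^3 (Der_K(S) is the free S-module with basis d/dx, d/dy, d/dz).\<close>
type_synonym 'k der = "'k S \<times> 'k S \<times> 'k S"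

definition scaleS :: "'k::field S \<Rightarrow> 'k der \<Rightarrow> 'k der" where
  "scaleS s \<theta> = (s * fst \<theta>, s * fst (snd \<theta>), s * snd (snd \<theta>))"

definition der_app :: "'k::field der \<Rightarrow> 'k vec3 \<Rightarrow> 'k S" where
  "der_app \<theta> \<alpha> = constS (fst \<alpha>) * fst \<theta> + constS (fst (snd \<alpha>)) * fst (snd \<theta>)
                  + constS (snd (snd \<alpha>)) * snd (snd \<theta>)"

text \<open>A central arrangement in K^3 is given by a finite set of defining forms (nonzero),
  distinct forms defining distinct hyperplanes. A multiplicity is a function to positive naturals.\<close>
definition multiarr :: "'k::field vec3 set \<Rightarrow> ('k vec3 \<Rightarrow> nat) \<Rightarrow> bool" where
  "multiarr A m \<longleftrightarrow> finite A \<and> (\<forall>\<alpha>\<in>A. \<alpha> \<noteq> 0 \<and> m \<alpha> > 0)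
     \<and> (\<forall>\<alpha>\<in>A. \<forall>\<beta>\<in>A. hyp \<alpha> = hyp \<beta> \<longrightarrow> \<alpha> = \<beta>)"

definition total_mult :: "'k vec3 set \<Rightarrow> ('k vec3 \<Rightarrow> nat) \<Rightarrow> nat" where
  "total_mult A m = (\<Sum>\<alpha>\<in>A. m \<alpha>)"

definition unbalanced :: "'k vec3 set \<Rightarrow> ('k vec3 \<Rightarrow> nat) \<Rightarrow> bool" where
  "unbalanced A m \<longleftrightarrow> (\<exists>H0\<in>A. 2 * m H0 \<ge> total_mult A m)"

definition Dmod :: "'k::field vec3 set \<Rightarrow> ('k vec3 \<Rightarrow> nat) \<Rightarrow> 'k der set" where
  "Dmod A m = {\<theta>. \<forall>\<alpha>\<in>A. formS \<alpha> ^ m \<alpha> dvd der_app \<theta> \<alpha>}"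

definition free_multiarr :: "'k::field vec3 set \<Rightarrow> ('k vec3 \<Rightarrow> nat) \<Rightarrow> bool" where
  "free_multiarr A m \<longleftrightarrow> (\<exists>B. B \<subseteq> Dmod A m \<and> \<not> module.dependent scaleS B
       \<and> module.span scaleS B = Dmod A m)"

definition weylA3 :: "'k::field vec3 set" where
  "weylA3 = {(1,0,0), (0,1,0), (0,0,1), (1,-1,0), (0,1,-1), (1,0,-1)}"

end

theory Submission
  imports Defs
begin


definition rhom :: "('a::comm_ring_1 \<Rightarrow> 'b::comm_ring_1) \<Rightarrow> bool" where
  "rhom f \<longleftrightarrow> f 1 = 1 \<and> (\<forall>a b. f (a+b) = f a + f b) \<and> (\<forall>a b. f (a*b) = f a * f b)"

lemma rhomD:
  assumes "rhom f"
  shows "f 1 = 1" "f (a+b) = f a + f b" "f (a*b) = f a * f b" "f 0 = 0" "f (-a) = - f a"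
    "f (a - b) = f a - f b" "f (a ^ n) = f a ^ n"
proof -
  show 1: "f 1 = 1" "f (a+b) = f a + f b" "f (a*b) = f a * f b" using assms by (auto simp: rhom_def)
  have add: "\<And>a b. f (a+b) = f a + f b" using assms by (auto simp: rhom_def)
  have mul: "\<And>a b. f (a*b) = f a * f b" using assms by (auto simp: rhom_def)
  show z: "f 0 = 0" using add[of 0 0] by simp
  have nn: "\<And>x. f (-x) = - f x" using add z by (metis add_eq_0_iff add.right_inverse)
  show "f (-a) = - f a" by (rule nn)
  show "f (a - b) = f a - f b" using add[of a "-b"] nn[of b] by simp
  show "f (a ^ n) = f a ^ n" by (induct n) (auto simp: 1 mul)
qed

lemma rhom_dvd: "rhom f \<Longrightarrow> a dvd b \<Longrightarrow> f a dvd f b"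
  by (auto simp: dvd_def rhomD)

lemma rhom_comp: "rhom f \<Longrightarrow> rhom g \<Longrightarrow> rhom (\<lambda>x. f (g x))"
  by (simp add: rhom_def)

lemma map_poly_add_hom: "rhom f \<Longrightarrow> map_poly f (p + q) = map_poly f p + map_poly f q"
  by (intro poly_eqI) (simp add: coeff_map_poly rhomD)

lemma map_poly_mult_hom: assumes "rhom f" shows "map_poly f (p * q) = map_poly f p * map_poly f q"
proof (induct p)
  case 0 then show ?case by simp
next
  case (pCons a p)
  have "map_poly f (pCons a p * q) = map_poly f (smult a q + pCons 0 (p * q))"
    by (simp add: mult_pCons_left)
  also have "\<dots> = smult (f a) (map_poly f q) + pCons 0 (map_poly f p * map_poly f q)"
    using assms pCons by (simp add: map_poly_add_hom map_poly_smult map_poly_pCons rhomD)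
  also have "\<dots> = map_poly f (pCons a p) * map_poly f q"
    using assms by (simp add: map_poly_pCons rhomD mult_pCons_left)
  finally show ?case .
qed

lemma rhom_eval: assumes "rhom f" shows "rhom (\<lambda>p. poly (map_poly f p) x)"
  using assms unfolding rhom_def[of "\<lambda>p. poly (map_poly f p) x"]
  by (simp add: map_poly_add_hom map_poly_mult_hom rhomD)

lemma rhom_const: "rhom (\<lambda>a. [:a:])"
  by (simp add: rhom_def one_pCons)

lemma rhom_constS: "rhom (constS :: 'k::field \<Rightarrow> 'k S)"
proof -
  have "rhom (\<lambda>a::'k. [:[:[:a:]:]:])"
    by (rule rhom_comp[OF rhom_const rhom_comp[OF rhom_const rhom_const]])
  then show ?thesis by (simp add: constS_def[abs_def])
qed

lemma constS_0[simp]: "constS 0 = 0" and constS_1[simp]: "constS 1 = 1"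
  using rhomD[OF rhom_constS] by auto

definition E1 :: "'k::field S \<Rightarrow> 'k poly \<Rightarrow> 'k S" where
  "E1 l1 p = poly (map_poly constS p) l1"
definition E2 :: "'k::field S \<Rightarrow> 'k S \<Rightarrow> 'k poly poly \<Rightarrow> 'k S" where
  "E2 l1 l2 q = poly (map_poly (E1 l1) q) l2"

lemma rhom_E1: "rhom (E1 l1)" unfolding E1_def[abs_def] by (intro rhom_eval rhom_constS)
lemma rhom_E2: "rhom (E2 l1 l2)" unfolding E2_def[abs_def] by (intro rhom_eval rhom_E1)
lemma E1_0[simp]: "E1 l1 0 = 0" and E1_1[simp]: "E1 l1 1 = 1" using rhomD[OF rhom_E1] by auto
lemma E2_0[simp]: "E2 l1 l2 0 = 0" and E2_1[simp]: "E2 l1 l2 1 = 1" using rhomD[OF rhom_E2] by auto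

definition subst :: "'k::field S \<Rightarrow> 'k S \<Rightarrow> 'k S \<Rightarrow> 'k S \<Rightarrow> 'k S" where
  "subst l1 l2 l3 f = poly (map_poly (E2 l1 l2) f) l3"

lemma rhom_subst: "rhom (subst l1 l2 l3)"
  unfolding subst_def[abs_def]
  by (intro rhom_eval rhom_E2)

lemma subst_const[simp]: "subst l1 l2 l3 (constS a) = constS a"
  by (simp add: subst_def E2_def E1_def constS_def map_poly_pCons rhomD)

lemma subst_X[simp]: "subst l1 l2 l3 varX = l1"
  by (simp add: subst_def E2_def E1_def varX_def map_poly_pCons rhomD)

lemma subst_Y[simp]: "subst l1 l2 l3 varY = l2"
  by (simp add: subst_def E2_def E1_def varY_def map_poly_pCons rhomD)

lemma subst_Z[simp]: "subst l1 l2 l3 varZ = l3"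
  by (simp add: subst_def E2_def E1_def varZ_def map_poly_pCons rhomD)

lemma rhom_unique:
  fixes g h :: "'k::field S \<Rightarrow> 'k S"
  assumes g: "rhom g" and h: "rhom h" and c: "\<And>a. g (constS a) = h (constS a)"
    and x: "g varX = h varX" and y: "g varY = h varY" and z: "g varZ = h varZ"
  shows "g f = h f"
proof -
  have A: "g [:[:p:]:] = h [:[:p:]:]" for p :: "'k poly"
  proof (induct p)
    case 0 then show ?case using g h by (simp add: rhomD)
  next
    case (pCons a p)
    have "[:[:pCons a p:]:] = constS a + varX * [:[:p:]:]"
      by (simp add: constS_def varX_def)
    then show ?case by (simp only: rhomD[OF g] rhomD[OF h] pCons c x)
  qed
  have B: "g [:q:] = h [:q:]" for q :: "'k poly poly"
  proof (induct q)
    case 0 then show ?case using g h by (simp add: rhomD)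
  next
    case (pCons p q)
    have "[:pCons p q:] = [:[:p:]:] + varY * [:q:]"
      by (simp add: varY_def)
    then show ?case by (simp only: rhomD[OF g] rhomD[OF h] pCons A y)
  qed
  show ?thesis
  proof (induct f)
    case 0 then show ?case using g h by (simp add: rhomD)
  next
    case (pCons q f)
    have "pCons q f = [:q:] + varZ * f"
      by (simp add: varZ_def)
    then show ?case by (simp only: rhomD[OF g] rhomD[OF h] pCons B z)
  qed
qed


lemma scale3_simp[simp]: "scale3 c (a,b,d) = (c*a, c*b, c*d)" by (simp add: scale3_def)

interpretation M: module "scaleS :: 'k::field S \<Rightarrow> 'k der \<Rightarrow> 'k der"
  by unfold_locales (auto simp: scaleS_def algebra_simps)

lemma scaleS_simp[simp]: "scaleS s (a,b,c) = (s*a, s*b, s*c)" by (simp add: scaleS_def)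

lemma constS_add: "constS (a+b) = constS a + constS b"
  and constS_mult: "constS (a*b) = constS a * constS b"
  and constS_minus: "constS (-a) = - constS a"
  and constS_diff: "constS (a-b) = constS a - constS b"
  using rhomD[OF rhom_constS] by auto

lemmas cS = constS_add constS_mult constS_minus constS_diff

definition lin :: "'k::field vec3 \<Rightarrow> 'k vec3 \<Rightarrow> 'k vec3 \<Rightarrow> 'k vec3 \<Rightarrow> 'k vec3" where
  "lin b1 b2 b3 h = scale3 (fst h) b1 + scale3 (fst (snd h)) b2 + scale3 (snd (snd h)) b3"

lemma lin_simp: "lin (b11,b12,b13) (b21,b22,b23) (b31,b32,b33) (h1,h2,h3) =
  (h1*b11+h2*b21+h3*b31, h1*b12+h2*b22+h3*b32, h1*b13+h2*b23+h3*b33)"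
  by (simp add: lin_def)

lemma formS_scale: "formS (scale3 c v) = constS c * formS v"
  by (cases v) (simp add: formS_def cS algebra_simps)

lemma der_app_scale: "der_app \<theta> (scale3 c v) = constS c * der_app \<theta> v"
  by (cases v) (simp add: der_app_def cS algebra_simps)

definition sig :: "'k::field vec3 \<Rightarrow> 'k vec3 \<Rightarrow> 'k vec3 \<Rightarrow> 'k S \<Rightarrow> 'k S" where
  "sig b1 b2 b3 = subst (formS b1) (formS b2) (formS b3)"

lemma rhom_sig: "rhom (sig b1 b2 b3)" unfolding sig_def by (rule rhom_subst)

lemma sig_const[simp]: "sig b1 b2 b3 (constS a) = constS a" by (simp add: sig_def)

lemma sig_formS: "sig b1 b2 b3 (formS h) = formS (lin b1 b2 b3 h)"
proof -
  obtain h1 h2 h3 where h: "h = (h1,h2,h3)" by (cases h) auto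
  obtain b11 b12 b13 where 1: "b1 = (b11,b12,b13)" by (cases b1) auto
  obtain b21 b22 b23 where 2: "b2 = (b21,b22,b23)" by (cases b2) auto
  obtain b31 b32 b33 where 3: "b3 = (b31,b32,b33)" by (cases b3) auto
  have "sig b1 b2 b3 (formS h) = constS h1 * formS b1 + constS h2 * formS b2 + constS h3 * formS b3"
    unfolding h by (simp add: formS_def[of "(h1,h2,h3)"] rhomD[OF rhom_sig]) (simp add: sig_def)
  also have "\<dots> = formS (lin b1 b2 b3 h)"
    unfolding 1 2 3 h lin_simp formS_def by (simp add: cS algebra_simps)
  finally show ?thesis .
qed

definition sigD :: "('k::field S \<Rightarrow> 'k S) \<Rightarrow> 'k der \<Rightarrow> 'k der" where
  "sigD s \<theta> = (s (fst \<theta>), s (fst (snd \<theta>)), s (snd (snd \<theta>)))"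

definition mulR :: "'k::field vec3 \<Rightarrow> 'k vec3 \<Rightarrow> 'k vec3 \<Rightarrow> 'k der \<Rightarrow> 'k der" where
  "mulR r1 r2 r3 \<theta> = (der_app \<theta> r1, der_app \<theta> r2, der_app \<theta> r3)"

lemma der_app_mulR: "der_app (mulR r1 r2 r3 \<theta>) h = der_app \<theta> (lin r1 r2 r3 h)"
  by (cases \<theta>; cases h; cases r1; cases r2; cases r3)
     (simp add: mulR_def der_app_def lin_simp cS algebra_simps)

lemma der_app_sigD: "rhom s \<Longrightarrow> (\<And>a. s (constS a) = constS a) \<Longrightarrow> der_app (sigD s \<theta>) h = s (der_app \<theta> h)"
  by (simp add: sigD_def der_app_def rhomD)

lemma mulR_std: "mulR (1,0,0) (0,1,0) (0,0,1) \<theta> = \<theta>"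
  by (cases \<theta>) (simp add: mulR_def der_app_def)

lemma mulR_mulR: "(\<And>h. lin r1 r2 r3 (lin q1 q2 q3 h) = h) \<Longrightarrow> mulR q1 q2 q3 (mulR r1 r2 r3 \<theta>) = \<theta>"
proof -
  assume a: "\<And>h. lin r1 r2 r3 (lin q1 q2 q3 h) = h"
  have l: "lin q1 q2 q3 (1,0,0) = q1" "lin q1 q2 q3 (0,1,0) = q2" "lin q1 q2 q3 (0,0,1) = q3"
    by (cases q1; cases q2; cases q3; simp add: lin_def)+
  have "mulR q1 q2 q3 (mulR r1 r2 r3 \<theta>) = (der_app \<theta> (1,0,0), der_app \<theta> (0,1,0), der_app \<theta> (0,0,1))"
    using a[of "(1,0,0)"] a[of "(0,1,0)"] a[of "(0,0,1)"] l
    by (simp add: mulR_def[of q1 q2 q3] der_app_mulR)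
  then show ?thesis by (cases \<theta>) (simp add: der_app_def)
qed

lemma mulR_add: "mulR r1 r2 r3 (x + y) = mulR r1 r2 r3 x + mulR r1 r2 r3 y"
  by (cases x; cases y) (simp add: mulR_def der_app_def algebra_simps)
lemma mulR_scale: "mulR r1 r2 r3 (scaleS s x) = scaleS s (mulR r1 r2 r3 x)"
  by (cases x) (simp add: mulR_def der_app_def algebra_simps)
lemma sigD_add: "rhom s \<Longrightarrow> sigD s (x + y) = sigD s x + sigD s y"
  by (cases x; cases y) (simp add: sigD_def rhomD)
lemma sigD_scale: "rhom s \<Longrightarrow> sigD s (scaleS a x) = scaleS (s a) (sigD s x)"
  by (cases x) (simp add: sigD_def rhomD)
lemma sigD_sigD: "(\<And>x. s (t x) = x) \<Longrightarrow> sigD s (sigD t x) = x"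
  by (simp add: sigD_def)
lemma sigD_mulR: assumes "rhom s" "\<And>a. s (constS a) = constS a"
  shows "sigD s (mulR r1 r2 r3 x) = mulR r1 r2 r3 (sigD s x)"
  using der_app_sigD[OF assms, of x] by (simp add: mulR_def sigD_def)


lemma span_transport:
  fixes \<Theta> :: "'k::field der \<Rightarrow> 'k der"
  assumes add: "\<And>x y. \<Theta> (x+y) = \<Theta> x + \<Theta> y"
    and sc: "\<And>s x. \<Theta> (scaleS s x) = scaleS (\<sigma> s) (\<Theta> x)"
    and z: "\<Theta> 0 = 0"
  shows "\<Theta> ` M.span S \<subseteq> M.span (\<Theta> ` S)"
proof
  fix y assume "y \<in> \<Theta> ` M.span S"
  then obtain x where x: "x \<in> M.span S" "y = \<Theta> x" by auto
  have "\<Theta> x \<in> M.span (\<Theta> ` S)"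
    using x(1)
  proof (induct rule: M.span_induct_alt)
    case base then show ?case by (simp add: z M.span_zero)
  next
    case (step c x y)
    then show ?case by (simp add: add sc M.span_add M.span_scale M.span_base)
  qed
  then show "y \<in> M.span (\<Theta> ` S)" using x by simp
qed

lemma free_transport:
  fixes \<Theta> \<Theta>' :: "'k::field der \<Rightarrow> 'k der" and \<sigma> \<tau> :: "'k S \<Rightarrow> 'k S"
  assumes rs: "rhom \<sigma>" and rt: "rhom \<tau>" and st: "\<And>x. \<sigma> (\<tau> x) = x" and ts: "\<And>x. \<tau> (\<sigma> x) = x"
    and add: "\<And>x y. \<Theta> (x+y) = \<Theta> x + \<Theta> y"
    and sc: "\<And>s x. \<Theta> (scaleS s x) = scaleS (\<sigma> s) (\<Theta> x)"
    and i1: "\<And>x. \<Theta>' (\<Theta> x) = x" and i2: "\<And>x. \<Theta> (\<Theta>' x) = x"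
    and D: "D' = \<Theta> ` D"
    and fr: "B \<subseteq> D" "M.independent B" "M.span B = D"
  shows "\<exists>B'. B' \<subseteq> D' \<and> M.independent B' \<and> M.span B' = D'"
proof -
  have z: "\<Theta> 0 = 0" using add[of 0 0] by simp
  have add': "\<Theta>' (x+y) = \<Theta>' x + \<Theta>' y" for x y
  proof -
    have e: "x + y = \<Theta> (\<Theta>' x + \<Theta>' y)" by (simp only: add i2)
    show ?thesis by (subst e) (simp only: i1)
  qed
  have sc': "\<Theta>' (scaleS s x) = scaleS (\<tau> s) (\<Theta>' x)" for s x
  proof -
    have e: "scaleS s x = \<Theta> (scaleS (\<tau> s) (\<Theta>' x))" by (simp only: sc i2 st)
    show ?thesis by (subst e) (simp only: i1)
  qed
  have z': "\<Theta>' 0 = 0" using add'[of 0 0] by simp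
  have injT: "inj_on \<Theta> X" for X by (rule inj_onI) (metis i1)
  have sumT: "\<Theta> (\<Sum>v\<in>T. f v) = (\<Sum>v\<in>T. \<Theta> (f v))" for T and f :: "'k der \<Rightarrow> 'k der"
    using sum_comp_morphism[of \<Theta> f T, OF z add] by (simp add: o_def)
  define B' where "B' = \<Theta> ` B"
  have "B' \<subseteq> D'" using fr D by (auto simp: B'_def M.span_base)
  moreover have "M.independent B'"
  proof
    assume "M.dependent B'"
    then obtain t u v0 where t: "finite t" "t \<subseteq> B'" "(\<Sum>v\<in>t. scaleS (u v) v) = 0" "v0 \<in> t" "u v0 \<noteq> 0"
      unfolding M.dependent_explicit by blast
    define t0 where "t0 = \<Theta>' ` t"
    have tt: "t = \<Theta> ` t0" unfolding t0_def image_image i2 by simp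
    have t0B: "t0 \<subseteq> B" using t(2) unfolding t0_def B'_def by (auto simp: i1)
    have "\<Theta> (\<Sum>w\<in>t0. scaleS (\<tau> (u (\<Theta> w))) w) = (\<Sum>w\<in>t0. scaleS (u (\<Theta> w)) (\<Theta> w))"
      by (simp add: sumT sc st)
    also have "\<dots> = (\<Sum>v\<in>t. scaleS (u v) v)"
      unfolding tt by (subst sum.reindex[OF injT]) (simp add: o_def)
    also have "\<dots> = 0" by (rule t(3))
    finally have "\<Theta>' (\<Theta> (\<Sum>w\<in>t0. scaleS (\<tau> (u (\<Theta> w))) w)) = \<Theta>' 0"
      by (rule arg_cong)
    then have s0: "(\<Sum>w\<in>t0. scaleS (\<tau> (u (\<Theta> w))) w) = 0"
      by (simp only: i1 z')
    have vm: "\<Theta>' v0 \<in> t0" using t(4) by (simp add: t0_def)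
    have ft: "finite t0" using t(1) by (simp add: t0_def)
    have "\<tau> (u (\<Theta> (\<Theta>' v0))) = 0"
      by (rule M.independentD[OF fr(2) ft t0B s0 vm])
    then have "\<sigma> (\<tau> (u v0)) = \<sigma> 0" by (simp only: i2)
    then have "u v0 = 0" by (simp only: st rhomD(4)[OF rs])
    then show False using t(5) by simp
  qed
  moreover have "M.span B' = D'"
  proof
    show "M.span B' \<subseteq> D'"
    proof -
      have "\<Theta>' ` M.span B' \<subseteq> M.span (\<Theta>' ` B')"
        by (rule span_transport[of \<Theta>' \<tau>]) (auto simp: add' sc' z')
      also have "\<Theta>' ` B' = B" unfolding B'_def image_image i1 by simp
      finally have "\<Theta> ` \<Theta>' ` M.span B' \<subseteq> \<Theta> ` M.span B" by (rule image_mono)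
      then show ?thesis unfolding image_image i2 D fr(3) by simp
    qed
    show "D' \<subseteq> M.span B'"
      using span_transport[of \<Theta> \<sigma> B, OF add sc z] unfolding D fr(3) B'_def .
  qed
  ultimately show ?thesis by blast
qed




definition det3 :: "'k::field vec3 \<Rightarrow> 'k vec3 \<Rightarrow> 'k vec3 \<Rightarrow> 'k" where
  "det3 a b c = fst a * (fst (snd b) * snd (snd c) - snd (snd b) * fst (snd c))
     - fst (snd a) * (fst b * snd (snd c) - snd (snd b) * fst c)
     + snd (snd a) * (fst b * fst (snd c) - fst (snd b) * fst c)"

lemma div_helper:
  fixes D u A B C x1 x2 x3 :: "'k::field"
  assumes "D \<noteq> 0" "D * u = A*x1 + B*x2 + C*x3"
  shows "u = A/D*x1 + B/D*x2 + C/D*x3"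
  using assms by (simp add: field_simps)

lemma cramer:
  fixes a1 a2 a3 w :: "'k::field vec3"
  assumes D: "det3 a1 a2 a3 \<noteq> 0"
  shows "w = scale3 (det3 w a2 a3 / det3 a1 a2 a3) a1 + scale3 (det3 a1 w a3 / det3 a1 a2 a3) a2
           + scale3 (det3 a1 a2 w / det3 a1 a2 a3) a3"
proof -
  obtain x1 y1 z1 where 1: "a1 = (x1,y1,z1)" by (cases a1) auto
  obtain x2 y2 z2 where 2: "a2 = (x2,y2,z2)" by (cases a2) auto
  obtain x3 y3 z3 where 3: "a3 = (x3,y3,z3)" by (cases a3) auto
  obtain u v t where w: "w = (u,v,t)" by (cases w) auto
  let ?D = "det3 a1 a2 a3" and ?A = "det3 w a2 a3" and ?B = "det3 a1 w a3" and ?C = "det3 a1 a2 w"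
  have e1: "?D * u = ?A*x1 + ?B*x2 + ?C*x3" unfolding 1 2 3 w det3_def by simp algebra
  have e2: "?D * v = ?A*y1 + ?B*y2 + ?C*y3" unfolding 1 2 3 w det3_def by simp algebra
  have e3: "?D * t = ?A*z1 + ?B*z2 + ?C*z3" unfolding 1 2 3 w det3_def by simp algebra
  show ?thesis using div_helper[OF D e1] div_helper[OF D e2] div_helper[OF D e3]
    unfolding 1 2 3 w by simp
qed

lemma det3_scale: "det3 (scale3 \<alpha> a) (scale3 \<beta> b) (scale3 \<gamma> c) = \<alpha>*\<beta>*\<gamma>*det3 a b c"
  by (cases a; cases b; cases c) (simp add: det3_def algebra_simps)


lemma det3_lin: "det3 (scale3 p1 a1 + scale3 p2 a2) (scale3 s2 a2 + scale3 s3 a3) (scale3 r1 a1 + scale3 r3 a3)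
   = (p1*s2*r3 + p2*s3*r1) * det3 a1 a2 a3"
proof -
  obtain x1 y1 z1 where 1: "a1 = (x1,y1,z1)" by (cases a1) auto
  obtain x2 y2 z2 where 2: "a2 = (x2,y2,z2)" by (cases a2) auto
  obtain x3 y3 z3 where 3: "a3 = (x3,y3,z3)" by (cases a3) auto
  show ?thesis unfolding 1 2 3 det3_def apply simp
    by algebra
qed

lemma det3_swap1: "det3 a c b = - det3 a b c"
proof -
  obtain x1 y1 z1 where 1: "a = (x1,y1,z1)" by (cases a) auto
  obtain x2 y2 z2 where 2: "b = (x2,y2,z2)" by (cases b) auto
  obtain x3 y3 z3 where 3: "c = (x3,y3,z3)" by (cases c) auto
  show ?thesis unfolding 1 2 3 det3_def apply simp by algebra
qed

lemma det3_swap2: "det3 b c a = det3 a b c"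
proof -
  obtain x1 y1 z1 where 1: "a = (x1,y1,z1)" by (cases a) auto
  obtain x2 y2 z2 where 2: "b = (x2,y2,z2)" by (cases b) auto
  obtain x3 y3 z3 where 3: "c = (x3,y3,z3)" by (cases c) auto
  show ?thesis unfolding 1 2 3 det3_def apply simp by algebra
qed

lemma vec_comb: "scale3 k (lin (scale3 \<alpha>1 u1) (scale3 \<alpha>2 u2) (scale3 \<alpha>3 u3) (h1,h2,h3))
   = scale3 (k*h1*\<alpha>1) u1 + scale3 (k*h2*\<alpha>2) u2 + scale3 (k*h3*\<alpha>3) u3"
  by (cases u1; cases u2; cases u3) (simp add: lin_def algebra_simps)

lemma structure3:
  fixes a1 a2 a3 a4 a5 a6 :: "'k::field vec3"
  assumes D: "det3 a1 a2 a3 \<noteq> 0" and z4: "det3 a1 a2 a4 = 0" and z5: "det3 a2 a3 a5 = 0"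
    and z6: "det3 a1 a3 a6 = 0" and z456: "det3 a4 a5 a6 = 0"
    and n41: "\<And>c. a4 \<noteq> scale3 c a1" and n42: "\<And>c. a4 \<noteq> scale3 c a2"
    and n61: "\<And>c. a6 \<noteq> scale3 c a1" and n63: "\<And>c. a6 \<noteq> scale3 c a3"
    and n53: "\<And>c. a5 \<noteq> scale3 c a3"
  shows "\<exists>b1 b2 b3 c1 c2 c3 c4 c5 c6. det3 b1 b2 b3 \<noteq> 0 \<and> c1 \<noteq> 0 \<and> c2 \<noteq> 0 \<and> c3 \<noteq> 0
     \<and> c4 \<noteq> 0 \<and> c5 \<noteq> 0 \<and> c6 \<noteq> 0
     \<and> a1 = scale3 c1 (lin b1 b2 b3 (1,0,0)) \<and> a2 = scale3 c2 (lin b1 b2 b3 (0,1,0))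
     \<and> a3 = scale3 c3 (lin b1 b2 b3 (0,0,1)) \<and> a4 = scale3 c4 (lin b1 b2 b3 (1,-1,0))
     \<and> a5 = scale3 c5 (lin b1 b2 b3 (0,1,-1)) \<and> a6 = scale3 c6 (lin b1 b2 b3 (1,0,-1))"
proof -
  let ?D = "det3 a1 a2 a3"
  define p1 where "p1 = det3 a4 a2 a3 / ?D"
  define p2 where "p2 = det3 a1 a4 a3 / ?D"
  define r1 where "r1 = det3 a6 a2 a3 / ?D"
  define r3 where "r3 = det3 a1 a2 a6 / ?D"
  define s2 where "s2 = det3 a1 a5 a3 / ?D"
  define s3 where "s3 = det3 a1 a2 a5 / ?D"
  have a4: "a4 = scale3 p1 a1 + scale3 p2 a2"
    using cramer[OF D, of a4] z4 unfolding p1_def p2_def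
    by (cases a1; cases a2; cases a3; cases a4) simp
  have z6': "det3 a1 a6 a3 = 0" using z6 det3_swap1[of a1 a3 a6] by simp
  have a6: "a6 = scale3 r1 a1 + scale3 r3 a3"
    using cramer[OF D, of a6] z6' unfolding r1_def r3_def
    by (cases a1; cases a2; cases a3; cases a6) simp
  have z5': "det3 a5 a2 a3 = 0" using z5 det3_swap2[where a=a5 and b=a2 and c=a3] by simp
  have a5: "a5 = scale3 s2 a2 + scale3 s3 a3"
    using cramer[OF D, of a5] z5' unfolding s2_def s3_def
    by (cases a1; cases a2; cases a3; cases a5) simp
  have p1: "p1 \<noteq> 0" using n42[of p2] a4 by (cases a1; cases a2; auto)
  have p2: "p2 \<noteq> 0" using n41[of p1] a4 by (cases a1; cases a2; auto)
  have r1: "r1 \<noteq> 0" using n63[of r3] a6 by (cases a1; cases a3; auto)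
  have r3: "r3 \<noteq> 0" using n61[of r1] a6 by (cases a1; cases a3; auto)
  have s2: "s2 \<noteq> 0" using n53[of s3] a5 by (cases a2; cases a3; auto)
  have rel: "p1*s2*r3 + p2*s3*r1 = 0"
    using z456 D unfolding a4 a5 a6 det3_lin by simp
  have s3: "s3 = - (p1*s2*r3) / (p2*r1)"
  proof -
    have "p2*r1*s3 = - (p1*s2*r3)" using rel by (simp add: algebra_simps add_eq_0_iff2)
    then show ?thesis using p2 r1 by (simp add: field_simps)
  qed
  define b1 where "b1 = scale3 p1 a1"
  define b2 where "b2 = scale3 (-p2) a2"
  define b3 where "b3 = scale3 (-(r3*p1/r1)) a3"
  have dB: "det3 b1 b2 b3 \<noteq> 0" unfolding b1_def b2_def b3_def det3_scale using p1 p2 r1 r3 D by simp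
  have z0: "scale3 0 v = 0" for v :: "'k vec3" by (cases v) (simp add: zero_prod_def)
  have z1: "scale3 1 v = v" for v :: "'k vec3" by (cases v) simp
  moreover have "a1 = scale3 (1/p1) (lin b1 b2 b3 (1,0,0))"
  proof -
    have "scale3 (1/p1) (lin b1 b2 b3 (1,0,0)) = scale3 (1/p1*1*p1) a1 + scale3 (1/p1*0*(-p2)) a2 + scale3 (1/p1*0*(-(r3*p1/r1))) a3"
      unfolding b1_def b2_def b3_def by (rule vec_comb)
    then show ?thesis using p1 by (simp add: z0 z1)
  qed
  moreover have "a2 = scale3 (-1/p2) (lin b1 b2 b3 (0,1,0))"
  proof -
    have "scale3 (-1/p2) (lin b1 b2 b3 (0,1,0)) = scale3 (-1/p2*0*p1) a1 + scale3 (-1/p2*1*(-p2)) a2 + scale3 (-1/p2*0*(-(r3*p1/r1))) a3"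
      unfolding b1_def b2_def b3_def by (rule vec_comb)
    then show ?thesis using p2 by (simp add: z0 z1)
  qed
  moreover have "a3 = scale3 (-(r1/(r3*p1))) (lin b1 b2 b3 (0,0,1))"
  proof -
    have "scale3 (-(r1/(r3*p1))) (lin b1 b2 b3 (0,0,1)) = scale3 (-(r1/(r3*p1))*0*p1) a1 + scale3 (-(r1/(r3*p1))*0*(-p2)) a2 + scale3 (-(r1/(r3*p1))*1*(-(r3*p1/r1))) a3"
      unfolding b1_def b2_def b3_def by (rule vec_comb)
    moreover have "-(r1/(r3*p1))*1*(-(r3*p1/r1)) = 1" using p1 r1 r3 by (simp add: divide_simps mult_ac)
    ultimately show ?thesis by (simp add: z0 z1)
  qed
  moreover have "a4 = scale3 1 (lin b1 b2 b3 (1,-1,0))"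
  proof -
    have "scale3 1 (lin b1 b2 b3 (1,-1,0)) = scale3 (1*1*p1) a1 + scale3 (1*(-1)*(-p2)) a2 + scale3 (1*0*(-(r3*p1/r1))) a3"
      unfolding b1_def b2_def b3_def by (rule vec_comb)
    then show ?thesis unfolding a4 by (simp add: z0 z1)
  qed
  moreover have "a5 = scale3 (-s2/p2) (lin b1 b2 b3 (0,1,-1))"
  proof -
    have "scale3 (-s2/p2) (lin b1 b2 b3 (0,1,-1)) = scale3 (-s2/p2*0*p1) a1 + scale3 (-s2/p2*1*(-p2)) a2 + scale3 (-s2/p2*(-1)*(-(r3*p1/r1))) a3"
      unfolding b1_def b2_def b3_def by (rule vec_comb)
    moreover have "-s2/p2*1*(-p2) = s2" using p2 by simp
    moreover have "-s2/p2*(-1)*(-(r3*p1/r1)) = s3" unfolding s3 using p2 r1 by (simp add: divide_simps mult_ac)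
    ultimately show ?thesis unfolding a5 by (simp add: z0 z1)
  qed
  moreover have "a6 = scale3 (r1/p1) (lin b1 b2 b3 (1,0,-1))"
  proof -
    have "scale3 (r1/p1) (lin b1 b2 b3 (1,0,-1)) = scale3 (r1/p1*1*p1) a1 + scale3 (r1/p1*0*(-p2)) a2 + scale3 (r1/p1*(-1)*(-(r3*p1/r1))) a3"
      unfolding b1_def b2_def b3_def by (rule vec_comb)
    moreover have "r1/p1*1*p1 = r1" using p1 by simp
    moreover have "r1/p1*(-1)*(-(r3*p1/r1)) = r3" using p1 r1 by (simp add: divide_simps mult_ac)
    ultimately show ?thesis unfolding a6 by (simp add: z0 z1)
  qed
  ultimately show ?thesis using p1 p2 r1 r3 s2 dB
    apply -
    apply (rule exI[where x=b1], rule exI[where x=b2], rule exI[where x=b3], rule exI[where x="1/p1"],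
       rule exI[where x="-1/p2"], rule exI[where x="-(r1/(r3*p1))"], rule exI[where x=1],
       rule exI[where x="-s2/p2"], rule exI[where x="r1/p1"])
    by simp
qed



lemma inverse3:
  fixes b1 b2 b3 :: "'k::field vec3"
  assumes D: "det3 b1 b2 b3 \<noteq> 0"
  shows "\<exists>d1 d2 d3. (\<forall>h. lin d1 d2 d3 (lin b1 b2 b3 h) = h) \<and> (\<forall>h. lin b1 b2 b3 (lin d1 d2 d3 h) = h)"
proof -
  obtain b11 b12 b13 where 1: "b1 = (b11,b12,b13)" by (cases b1) auto
  obtain b21 b22 b23 where 2: "b2 = (b21,b22,b23)" by (cases b2) auto
  obtain b31 b32 b33 where 3: "b3 = (b31,b32,b33)" by (cases b3) auto
  define \<Delta> where "\<Delta> = det3 b1 b2 b3"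
  have De: "\<Delta> = b11*(b22*b33 - b23*b32) - b12*(b21*b33 - b23*b31) + b13*(b21*b32 - b22*b31)"
    unfolding \<Delta>_def 1 2 3 det3_def by simp
  have Dn: "\<Delta> \<noteq> 0" using D \<Delta>_def by simp
  define d1 where "d1 = ((b22*b33-b23*b32)/\<Delta>, -(b12*b33-b13*b32)/\<Delta>, (b12*b23-b13*b22)/\<Delta>)"
  define d2 where "d2 = (-(b21*b33-b23*b31)/\<Delta>, (b11*b33-b13*b31)/\<Delta>, -(b11*b23-b13*b21)/\<Delta>)"
  define d3 where "d3 = ((b21*b32-b22*b31)/\<Delta>, -(b11*b32-b12*b31)/\<Delta>, (b11*b22-b12*b21)/\<Delta>)"
  have "lin d1 d2 d3 (lin b1 b2 b3 h) = h" for h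
  proof -
    obtain h1 h2 h3 where h: "h = (h1,h2,h3)" by (cases h) auto
    show ?thesis unfolding h 1 2 3 d1_def d2_def d3_def lin_simp using Dn
      apply (simp add: divide_simps)
      apply (simp add: De)
      by algebra
  qed
  moreover have "lin b1 b2 b3 (lin d1 d2 d3 h) = h" for h
  proof -
    obtain h1 h2 h3 where h: "h = (h1,h2,h3)" by (cases h) auto
    show ?thesis unfolding h 1 2 3 d1_def d2_def d3_def lin_simp using Dn
      apply (simp add: divide_simps)
      apply (simp add: De)
      by algebra
  qed
  ultimately show ?thesis by blast
qed



interpretation V3: vector_space "scale3 :: 'k::field \<Rightarrow> 'k vec3 \<Rightarrow> 'k vec3"
  by unfold_locales (auto simp: scale3_def algebra_simps)

lemma dim_zero3: "V3.dim ({0} :: 'k::field vec3 set) = 0"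
  using V3.dim_le_card[of "{0}" "{}"] by (simp add: V3.span_zero)

lemma span_std: "V3.span {(1,0,0),(0,1,0),(0,0,1::'k::field)} = UNIV"
proof -
  have "(a,b,c) \<in> V3.span {(1,0,0),(0,1,0),(0,0,1::'k)}" for a b c
  proof -
    have "(a,b,c) = scale3 a (1,0,0) + (scale3 b (0,1,0) + scale3 c (0,0,1))" by simp
    also have "\<dots> \<in> V3.span {(1,0,0),(0,1,0),(0,0,1::'k)}"
      by (intro V3.span_add V3.span_scale V3.span_base) auto
    finally show ?thesis .
  qed
  then show ?thesis by auto
qed

lemma dim_pos3:
  assumes "v \<in> W" "v \<noteq> (0::'k::field vec3)"
  shows "V3.dim W \<noteq> 0"
proof
  assume d: "V3.dim W = 0"
  obtain B where B: "B \<subseteq> W" "V3.independent B" "W \<subseteq> V3.span B" "card B = V3.dim W"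
    using V3.basis_exists by blast
  have "finite B" using V3.independent_span_bound[of "{(1,0,0),(0,1,0),(0,0,1::'k)}" B] B span_std by auto
  then have "B = {}" using B d by simp
  then show False using B assms by (auto simp: V3.span_empty)
qed

lemma codim3_zero: "codim3 ({0} :: 'k::field vec3 set) = 3"
proof -
  have "vector_space.dim (scale3 :: 'k \<Rightarrow> 'k vec3 \<Rightarrow> 'k vec3) {0} = 0" by (rule dim_zero3)
  then show ?thesis unfolding codim3_def by simp
qed

lemma codim3_ne: "v \<in> W \<Longrightarrow> v \<noteq> (0::'k::field vec3) \<Longrightarrow> codim3 W \<noteq> 3"
  unfolding codim3_def using dim_pos3[of v W] by simp

lemma hyp_iff: "(v1,v2,v3) \<in> hyp (a1,a2,a3) \<longleftrightarrow> a1*v1 + a2*v2 + a3*v3 = 0"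
  by (simp add: hyp_def)

lemma zero3: "(0::'k::field vec3) = (0,0,0)" by (simp add: zero_prod_def)

lemma hyp_scale: assumes "c \<noteq> 0" shows "hyp (scale3 c a) = hyp a"
proof -
  obtain a1 a2 a3 where a: "a = (a1,a2,a3)" by (cases a) auto
  have "c*a1*v1 + c*a2*v2 + c*a3*v3 = c*(a1*v1+a2*v2+a3*v3)" for v1 v2 v3 by (simp add: algebra_simps)
  then show ?thesis using assms unfolding a by (auto simp: hyp_def)
qed

lemma inter0:
  fixes a b c :: "'k::field vec3"
  assumes D: "det3 a b c \<noteq> 0"
  shows "hyp a \<inter> (hyp b \<inter> hyp c) = {0}"
proof -
  obtain a1 a2 a3 where a: "a = (a1,a2,a3)" by (cases a) auto
  obtain b1 b2 b3 where b: "b = (b1,b2,b3)" by (cases b) auto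
  obtain c1 c2 c3 where c: "c = (c1,c2,c3)" by (cases c) auto
  have "v = 0" if v: "v \<in> hyp a" "v \<in> hyp b" "v \<in> hyp c" for v
  proof -
    obtain v1 v2 v3 where vv: "v = (v1,v2,v3)" by (cases v) auto
    have da: "a1*v1+a2*v2+a3*v3 = 0" and db: "b1*v1+b2*v2+b3*v3 = 0" and dc: "c1*v1+c2*v2+c3*v3 = 0"
      using v unfolding vv a b c hyp_iff by auto
    let ?X = "a1*v1+a2*v2+a3*v3" and ?Y = "b1*v1+b2*v2+b3*v3" and ?Z = "c1*v1+c2*v2+c3*v3"
    have "det3 a b c * v1 = ?X*(b2*c3-b3*c2) + ?Y*(c2*a3-c3*a2) + ?Z*(a2*b3-a3*b2)"
      unfolding a b c det3_def by simp algebra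
    then have 1: "v1 = 0" using da db dc D by simp
    have "det3 a b c * v2 = ?X*(b3*c1-b1*c3) + ?Y*(c3*a1-c1*a3) + ?Z*(a3*b1-a1*b3)"
      unfolding a b c det3_def by simp algebra
    then have 2: "v2 = 0" using da db dc D by simp
    have "det3 a b c * v3 = ?X*(b1*c2-b2*c1) + ?Y*(c1*a2-c2*a1) + ?Z*(a1*b2-a2*b1)"
      unfolding a b c det3_def by simp algebra
    then have 3: "v3 = 0" using da db dc D by simp
    show ?thesis using 1 2 3 vv zero3 by simp
  qed
  moreover have "0 \<in> hyp x" for x :: "'k vec3" by (simp add: hyp_def zero3)
  ultimately show ?thesis by blast
qed

definition cr :: "'k::field vec3 \<Rightarrow> 'k vec3 \<Rightarrow> 'k vec3" where
  "cr a b = (fst (snd a) * snd (snd b) - snd (snd a) * fst (snd b),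
             snd (snd a) * fst b - fst a * snd (snd b),
             fst a * fst (snd b) - fst (snd a) * fst b)"

lemma cr_kernel:
  fixes a b c :: "'k::field vec3"
  assumes "det3 a b c = 0"
  shows "cr a b \<in> hyp a \<inter> (hyp b \<inter> hyp c)"
proof -
  obtain a1 a2 a3 where a: "a = (a1,a2,a3)" by (cases a) auto
  obtain b1 b2 b3 where b: "b = (b1,b2,b3)" by (cases b) auto
  obtain c1 c2 c3 where c: "c = (c1,c2,c3)" by (cases c) auto
  have "c1*(a2*b3-a3*b2) + c2*(a3*b1-a1*b3) + c3*(a1*b2-a2*b1) = det3 a b c"
    unfolding a b c det3_def by simp algebra
  moreover have "a1*(a2*b3-a3*b2) + a2*(a3*b1-a1*b3) + a3*(a1*b2-a2*b1) = 0" by algebra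
  moreover have "b1*(a2*b3-a3*b2) + b2*(a3*b1-a1*b3) + b3*(a1*b2-a2*b1) = 0" by algebra
  ultimately show ?thesis using assms unfolding a b c cr_def by (simp add: hyp_def)
qed

lemma cr_par:
  fixes a b :: "'k::field vec3"
  assumes "a \<noteq> 0" "cr a b = 0"
  shows "\<exists>c. b = scale3 c a"
proof -
  obtain a1 a2 a3 where a: "a = (a1,a2,a3)" by (cases a) auto
  obtain b1 b2 b3 where b: "b = (b1,b2,b3)" by (cases b) auto
  have e: "a2*b3 = a3*b2" "a3*b1 = a1*b3" "a1*b2 = a2*b1"
    using assms(2) unfolding a b cr_def zero3 by auto
  have nz: "a1 \<noteq> 0 \<or> a2 \<noteq> 0 \<or> a3 \<noteq> 0" using assms(1) unfolding a zero3 by auto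
  show ?thesis
  proof (cases "a1 \<noteq> 0")
    case True
    have "b = scale3 (b1/a1) a" unfolding a b using True e by (simp add: field_simps)
    then show ?thesis by blast
  next
    case F1: False
    show ?thesis
    proof (cases "a2 \<noteq> 0")
      case True
      have "b = scale3 (b2/a2) a" unfolding a b using True e F1 by (simp add: field_simps)
      then show ?thesis by blast
    next
      case False
      then have T: "a3 \<noteq> 0" using nz F1 by auto
      have "b = scale3 (b3/a3) a" unfolding a b using T e F1 False by (simp add: field_simps)
      then show ?thesis by blast
    qed
  qed
qed

lemma nonpar: "a \<noteq> 0 \<Longrightarrow> hyp a \<noteq> hyp b \<Longrightarrow> a \<noteq> scale3 c b"
  by (metis hyp_scale scale3_def mult_zero_left zero3 prod.collapse)

lemma cr_nz: "a \<noteq> 0 \<Longrightarrow> b \<noteq> 0 \<Longrightarrow> hyp a \<noteq> hyp b \<Longrightarrow> cr a b \<noteq> 0"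
  using cr_par nonpar by metis

lemma triple_indep:
  fixes a b c :: "'k::field vec3"
  assumes "codim3 (hyp a \<inter> (hyp b \<inter> hyp c)) = 3" "a \<noteq> 0" "b \<noteq> 0" "hyp a \<noteq> hyp b"
  shows "det3 a b c \<noteq> 0"
proof
  assume "det3 a b c = 0"
  then have "cr a b \<in> hyp a \<inter> (hyp b \<inter> hyp c)" by (rule cr_kernel)
  then have "codim3 (hyp a \<inter> (hyp b \<inter> hyp c)) \<noteq> 3" using cr_nz[OF assms(2-4)] by (rule codim3_ne)
  then show False using assms(1) by simp
qed

lemma triple_dep:
  fixes a b c :: "'k::field vec3"
  assumes "codim3 (hyp a \<inter> (hyp b \<inter> hyp c)) \<noteq> 3"
  shows "det3 a b c = 0"
proof (rule ccontr)
  assume "det3 a b c \<noteq> 0"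
  then have "hyp a \<inter> (hyp b \<inter> hyp c) = {0}" by (rule inter0)
  then show False using codim3_zero[where 'k='k] assms by simp
qed



lemma scale3_0: "scale3 0 v = (0::'k::field vec3)" by (cases v) (simp add: zero3)
lemma scale3_1: "scale3 1 v = (v::'k::field vec3)" by (cases v) simp
lemma lin_e1: "lin x y z (1,0,0) = x" by (simp add: lin_def scale3_0 scale3_1)
lemma lin_e2: "lin x y z (0,1,0) = y" by (simp add: lin_def scale3_0 scale3_1)
lemma lin_e3: "lin x y z (0,0,1) = z" by (simp add: lin_def scale3_0 scale3_1)

lemma unit_cancel:
  fixes u v X Y :: "'a::comm_ring_1"
  assumes uv: "u * v = 1"
  shows "((u*X)^n dvd u*Y) = (X^n dvd Y)"
proof
  assume "(u*X)^n dvd u*Y"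
  then obtain k where k: "u*Y = (u*X)^n * k" by (auto simp: dvd_def)
  have "Y = v*(u*Y)" using uv by (simp add: algebra_simps)
  also have "\<dots> = X^n * (v * u^n * k)" unfolding k by (simp add: power_mult_distrib algebra_simps)
  finally show "X^n dvd Y" by (rule dvdI)
next
  assume "X^n dvd Y"
  then obtain k where k: "Y = X^n * k" by (auto simp: dvd_def)
  have "(u*v)^n = 1" using uv by simp
  then have "u*Y = (u*v)^n * (u * X^n * k)" unfolding k by simp
  also have "\<dots> = (u*X)^n * (v^n * u * k)" by (simp add: power_mult_distrib algebra_simps)
  finally show "(u*X)^n dvd u*Y" by (rule dvdI)
qed

lemma constS_inv: "(c::'k::field) \<noteq> 0 \<Longrightarrow> constS c * constS (inverse c) = 1"
  by (simp add: constS_mult[symmetric])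

lemma hom_dvd_iff:
  assumes "rhom \<sigma>" "rhom \<tau>" "\<And>x. \<tau> (\<sigma> x) = x"
  shows "(\<sigma> F ^ n dvd \<sigma> G) = (F ^ n dvd G)"
proof
  assume "\<sigma> F ^ n dvd \<sigma> G"
  then have "\<tau> (\<sigma> F ^ n) dvd \<tau> (\<sigma> G)" by (rule rhom_dvd[OF assms(2)])
  then show "F ^ n dvd G" by (simp add: rhomD[OF assms(2)] assms(3))
next
  assume "F ^ n dvd G"
  then have "\<sigma> (F ^ n) dvd \<sigma> G" by (rule rhom_dvd[OF assms(1)])
  then show "\<sigma> F ^ n dvd \<sigma> G" by (simp add: rhomD[OF assms(1)])
qed

lemma rhom_id: "rhom (\<lambda>x. x)" by (simp add: rhom_def)

lemma sig_inverse:
  assumes inv: "\<And>h. lin b1 b2 b3 (lin d1 d2 d3 h) = h"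
  shows "sig b1 b2 b3 (sig d1 d2 d3 x) = x"
proof -
  have X: "sig d1 d2 d3 varX = formS d1" "sig d1 d2 d3 varY = formS d2" "sig d1 d2 d3 varZ = formS d3"
    by (simp_all add: sig_def)
  have e: "lin b1 b2 b3 d1 = (1,0,0)" "lin b1 b2 b3 d2 = (0,1,0)" "lin b1 b2 b3 d3 = (0,0,1)"
    using inv[of "(1,0,0)"] inv[of "(0,1,0)"] inv[of "(0,0,1)"] by (simp_all add: lin_e1 lin_e2 lin_e3)
  have f: "formS (1,0,0) = varX" "formS (0,1,0) = varY" "formS (0,0,1) = varZ"
    by (simp_all add: formS_def)
  show ?thesis
    by (rule rhom_unique[OF rhom_comp[OF rhom_sig rhom_sig] rhom_id, where f=x])
       (simp_all add: X sig_formS e f)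
qed



lemma Int3: "(\<Inter>H\<in>{x,y,z}. f H) = f x \<inter> (f y \<inter> f z)" by auto

theorem corollary1p4:
  fixes m :: "'k::field vec3 \<Rightarrow> nat"
    and A' :: "'k vec3 set" and m' :: "'k vec3 \<Rightarrow> nat"
    and \<phi> :: "'k vec3 \<Rightarrow> 'k vec3"
  assumes "multiarr weylA3 m"
    and "unbalanced weylA3 m"
    and "multiarr A' m'"
    and "bij_betw \<phi> weylA3 A'"
    and "\<forall>H\<in>weylA3. m' (\<phi> H) = m H"
    and "\<forall>B\<subseteq>weylA3. codim3 (\<Inter>H\<in>B. hyp H) = codim3 (\<Inter>H\<in>B. hyp (\<phi> H))"
  shows "free_multiarr weylA3 m \<longleftrightarrow> free_multiarr A' m'"
proof -
  have inj: "inj_on \<phi> weylA3" and img: "\<phi> ` weylA3 = A'" using assms(4) by (auto simp: bij_betw_def)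
  have nz: "\<And>H. H \<in> weylA3 \<Longrightarrow> \<phi> H \<noteq> 0" using assms(3) img by (auto simp: multiarr_def)
  have hd: "\<And>H K. H \<in> weylA3 \<Longrightarrow> K \<in> weylA3 \<Longrightarrow> H \<noteq> K \<Longrightarrow> hyp (\<phi> H) \<noteq> hyp (\<phi> K)"
  proof
    fix H K assume HK: "H \<in> weylA3" "K \<in> weylA3" "H \<noteq> K" "hyp (\<phi> H) = hyp (\<phi> K)"
    then have "\<phi> H = \<phi> K" using assms(3) img unfolding multiarr_def by blast
    then show False using inj HK by (auto dest: inj_onD)
  qed
  have hc: "\<And>B. B \<subseteq> weylA3 \<Longrightarrow> codim3 (\<Inter>H\<in>B. hyp H) = codim3 (\<Inter>H\<in>B. hyp (\<phi> H))"
    using assms(6) by blast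
  let ?e1 = "(1,0,0) :: 'k vec3" and ?e2 = "(0,1,0) :: 'k vec3" and ?e3 = "(0,0,1) :: 'k vec3"
  let ?e4 = "(1,-1,0) :: 'k vec3" and ?e5 = "(0,1,-1) :: 'k vec3" and ?e6 = "(1,0,-1) :: 'k vec3"
  have W: "weylA3 = {?e1, ?e2, ?e3, ?e4, ?e5, ?e6}" by (simp add: weylA3_def)
  have inW: "?e1 \<in> weylA3" "?e2 \<in> weylA3" "?e3 \<in> weylA3" "?e4 \<in> weylA3" "?e5 \<in> weylA3" "?e6 \<in> weylA3"
    by (simp_all add: W)
  define a1 where "a1 = \<phi> ?e1"
  define a2 where "a2 = \<phi> ?e2"
  define a3 where "a3 = \<phi> ?e3"
  define a4 where "a4 = \<phi> ?e4"
  define a5 where "a5 = \<phi> ?e5"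
  define a6 where "a6 = \<phi> ?e6"
  note adefs = a1_def a2_def a3_def a4_def a5_def a6_def
  have nzs: "a1 \<noteq> 0" "a2 \<noteq> 0" "a3 \<noteq> 0" "a4 \<noteq> 0" "a5 \<noteq> 0" "a6 \<noteq> 0"
    unfolding adefs using nz inW by auto
  have h12: "hyp a1 \<noteq> hyp a2" unfolding adefs by (rule hd) (simp_all add: W)
  have h41: "hyp a4 \<noteq> hyp a1" unfolding adefs by (rule hd) (simp_all add: W)
  have h42: "hyp a4 \<noteq> hyp a2" unfolding adefs by (rule hd) (simp_all add: W)
  have h61: "hyp a6 \<noteq> hyp a1" unfolding adefs by (rule hd) (simp_all add: W)
  have h63: "hyp a6 \<noteq> hyp a3" unfolding adefs by (rule hd) (simp_all add: W)
  have h53: "hyp a5 \<noteq> hyp a3" unfolding adefs by (rule hd) (simp_all add: W)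
  have D: "det3 a1 a2 a3 \<noteq> 0"
  proof -
    have "codim3 (hyp ?e1 \<inter> (hyp ?e2 \<inter> hyp ?e3)) = 3"
      using inter0[of ?e1 ?e2 ?e3] codim3_zero by (simp add: det3_def)
    moreover have "codim3 (hyp ?e1 \<inter> (hyp ?e2 \<inter> hyp ?e3)) = codim3 (hyp a1 \<inter> (hyp a2 \<inter> hyp a3))"
      using hc[of "{?e1,?e2,?e3}"] unfolding adefs Int3 by (simp add: W)
    ultimately show ?thesis using triple_indep nzs h12 by metis
  qed
  have z4: "det3 a1 a2 a4 = 0"
  proof (rule triple_dep)
    have "codim3 (hyp ?e1 \<inter> (hyp ?e2 \<inter> hyp ?e4)) \<noteq> 3"
      by (rule codim3_ne[of "(0,0,1)"]) (simp_all add: hyp_iff zero3)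
    moreover have "codim3 (hyp ?e1 \<inter> (hyp ?e2 \<inter> hyp ?e4)) = codim3 (hyp a1 \<inter> (hyp a2 \<inter> hyp a4))"
      using hc[of "{?e1,?e2,?e4}"] unfolding adefs Int3 by (simp add: W)
    ultimately show "codim3 (hyp a1 \<inter> (hyp a2 \<inter> hyp a4)) \<noteq> 3" by simp
  qed
  have z5: "det3 a2 a3 a5 = 0"
  proof (rule triple_dep)
    have "codim3 (hyp ?e2 \<inter> (hyp ?e3 \<inter> hyp ?e5)) \<noteq> 3"
      by (rule codim3_ne[of "(1,0,0)"]) (simp_all add: hyp_iff zero3)
    moreover have "codim3 (hyp ?e2 \<inter> (hyp ?e3 \<inter> hyp ?e5)) = codim3 (hyp a2 \<inter> (hyp a3 \<inter> hyp a5))"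
      using hc[of "{?e2,?e3,?e5}"] unfolding adefs Int3 by (simp add: W)
    ultimately show "codim3 (hyp a2 \<inter> (hyp a3 \<inter> hyp a5)) \<noteq> 3" by simp
  qed
  have z6: "det3 a1 a3 a6 = 0"
  proof (rule triple_dep)
    have "codim3 (hyp ?e1 \<inter> (hyp ?e3 \<inter> hyp ?e6)) \<noteq> 3"
      by (rule codim3_ne[of "(0,1,0)"]) (simp_all add: hyp_iff zero3)
    moreover have "codim3 (hyp ?e1 \<inter> (hyp ?e3 \<inter> hyp ?e6)) = codim3 (hyp a1 \<inter> (hyp a3 \<inter> hyp a6))"
      using hc[of "{?e1,?e3,?e6}"] unfolding adefs Int3 by (simp add: W)
    ultimately show "codim3 (hyp a1 \<inter> (hyp a3 \<inter> hyp a6)) \<noteq> 3" by simp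
  qed
  have z456: "det3 a4 a5 a6 = 0"
  proof (rule triple_dep)
    have "codim3 (hyp ?e4 \<inter> (hyp ?e5 \<inter> hyp ?e6)) \<noteq> 3"
      by (rule codim3_ne[of "(1,1,1)"]) (simp_all add: hyp_iff zero3)
    moreover have "codim3 (hyp ?e4 \<inter> (hyp ?e5 \<inter> hyp ?e6)) = codim3 (hyp a4 \<inter> (hyp a5 \<inter> hyp a6))"
      using hc[of "{?e4,?e5,?e6}"] unfolding adefs Int3 by (simp add: W)
    ultimately show "codim3 (hyp a4 \<inter> (hyp a5 \<inter> hyp a6)) \<noteq> 3" by simp
  qed
  obtain b1 b2 b3 c1 c2 c3 c4 c5 c6 where
    st: "det3 b1 b2 b3 \<noteq> 0" "c1 \<noteq> 0" "c2 \<noteq> 0" "c3 \<noteq> 0" "c4 \<noteq> 0" "c5 \<noteq> 0" "c6 \<noteq> 0"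
     "a1 = scale3 c1 (lin b1 b2 b3 ?e1)" "a2 = scale3 c2 (lin b1 b2 b3 ?e2)"
     "a3 = scale3 c3 (lin b1 b2 b3 ?e3)" "a4 = scale3 c4 (lin b1 b2 b3 ?e4)"
     "a5 = scale3 c5 (lin b1 b2 b3 ?e5)" "a6 = scale3 c6 (lin b1 b2 b3 ?e6)"
    using structure3[OF D z4 z5 z6 z456 nonpar[OF nzs(4) h41] nonpar[OF nzs(4) h42]
        nonpar[OF nzs(6) h61] nonpar[OF nzs(6) h63] nonpar[OF nzs(5) h53]]
    by blast
  have cf: "\<forall>H\<in>weylA3. \<exists>c. c \<noteq> 0 \<and> \<phi> H = scale3 c (lin b1 b2 b3 H)"
    unfolding W using st unfolding adefs by blast
  then obtain cf where cf: "\<And>H. H \<in> weylA3 \<Longrightarrow> cf H \<noteq> 0 \<and> \<phi> H = scale3 (cf H) (lin b1 b2 b3 H)"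
    by metis
  obtain d1 d2 d3 where inv1: "\<And>h. lin d1 d2 d3 (lin b1 b2 b3 h) = h"
    and inv2: "\<And>h. lin b1 b2 b3 (lin d1 d2 d3 h) = h"
    using inverse3[OF st(1)] by blast
  define \<sigma> where "\<sigma> = sig b1 b2 b3"
  define \<tau> where "\<tau> = sig d1 d2 d3"
  have rs: "rhom \<sigma>" and rt: "rhom \<tau>" unfolding \<sigma>_def \<tau>_def by (rule rhom_sig)+
  have st1: "\<And>x. \<sigma> (\<tau> x) = x" unfolding \<sigma>_def \<tau>_def by (rule sig_inverse[OF inv2])
  have ts1: "\<And>x. \<tau> (\<sigma> x) = x" unfolding \<sigma>_def \<tau>_def by (rule sig_inverse[OF inv1])
  have sc: "\<And>a. \<sigma> (constS a) = constS a" "\<And>a. \<tau> (constS a) = constS a" unfolding \<sigma>_def \<tau>_def by simp_all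
  define \<Theta> where "\<Theta> = (\<lambda>\<theta>. mulR d1 d2 d3 (sigD \<sigma> \<theta>))"
  define \<Theta>' where "\<Theta>' = (\<lambda>\<theta>. sigD \<tau> (mulR b1 b2 b3 \<theta>))"
  have Tadd: "\<And>x y. \<Theta> (x+y) = \<Theta> x + \<Theta> y" unfolding \<Theta>_def by (simp add: sigD_add[OF rs] mulR_add)
  have Tsc: "\<And>s x. \<Theta> (scaleS s x) = scaleS (\<sigma> s) (\<Theta> x)" unfolding \<Theta>_def by (simp add: sigD_scale[OF rs] mulR_scale)
  have T'add: "\<And>x y. \<Theta>' (x+y) = \<Theta>' x + \<Theta>' y" unfolding \<Theta>'_def by (simp add: sigD_add[OF rt] mulR_add)
  have T'sc: "\<And>s x. \<Theta>' (scaleS s x) = scaleS (\<tau> s) (\<Theta>' x)" unfolding \<Theta>'_def by (simp add: sigD_scale[OF rt] mulR_scale)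
  have i1: "\<And>x. \<Theta>' (\<Theta> x) = x" unfolding \<Theta>_def \<Theta>'_def
    by (simp add: mulR_mulR[OF inv1] sigD_sigD ts1)
  have i2: "\<And>x. \<Theta> (\<Theta>' x) = x" unfolding \<Theta>_def \<Theta>'_def
    by (simp add: sigD_sigD st1 mulR_mulR[OF inv2])
  have key: "\<And>H \<theta>. H \<in> weylA3 \<Longrightarrow>
     (formS (\<phi> H) ^ m' (\<phi> H) dvd der_app (\<Theta> \<theta>) (\<phi> H)) = (formS H ^ m H dvd der_app \<theta> H)"
  proof -
    fix H :: "'k vec3" and \<theta> assume H: "H \<in> weylA3"
    let ?c = "cf H"
    have c: "?c \<noteq> 0" and p: "\<phi> H = scale3 ?c (lin b1 b2 b3 H)" using cf[OF H] by auto
    have f: "formS (\<phi> H) = constS ?c * \<sigma> (formS H)"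
      unfolding p formS_scale \<sigma>_def sig_formS ..
    have "der_app (\<Theta> \<theta>) (\<phi> H) = constS ?c * der_app (sigD \<sigma> \<theta>) (lin d1 d2 d3 (lin b1 b2 b3 H))"
      unfolding p der_app_scale \<Theta>_def der_app_mulR ..
    also have "\<dots> = constS ?c * \<sigma> (der_app \<theta> H)"
      by (simp add: inv1 der_app_sigD[OF rs sc(1)])
    finally have g: "der_app (\<Theta> \<theta>) (\<phi> H) = constS ?c * \<sigma> (der_app \<theta> H)" .
    show "(formS (\<phi> H) ^ m' (\<phi> H) dvd der_app (\<Theta> \<theta>) (\<phi> H)) = (formS H ^ m H dvd der_app \<theta> H)"
      unfolding f g assms(5)[rule_format, OF H] unit_cancel[OF constS_inv[OF c]]
      by (rule hom_dvd_iff[OF rs rt ts1])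
  qed
  have memD: "\<And>\<theta>. (\<Theta> \<theta> \<in> Dmod A' m') = (\<theta> \<in> Dmod weylA3 m)"
  proof -
    fix \<theta>
    have "(\<Theta> \<theta> \<in> Dmod A' m') = (\<forall>H\<in>weylA3. formS (\<phi> H) ^ m' (\<phi> H) dvd der_app (\<Theta> \<theta>) (\<phi> H))"
      unfolding Dmod_def img[symmetric] by simp
    also have "\<dots> = (\<forall>H\<in>weylA3. formS H ^ m H dvd der_app \<theta> H)" using key by simp
    finally show "(\<Theta> \<theta> \<in> Dmod A' m') = (\<theta> \<in> Dmod weylA3 m)" unfolding Dmod_def by simp
  qed
  have DD: "Dmod A' m' = \<Theta> ` Dmod weylA3 m"
  proof
    show "\<Theta> ` Dmod weylA3 m \<subseteq> Dmod A' m'" using memD by auto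
    show "Dmod A' m' \<subseteq> \<Theta> ` Dmod weylA3 m"
    proof
      fix x assume "x \<in> Dmod A' m'"
      then have "\<Theta> (\<Theta>' x) \<in> Dmod A' m'" by (simp add: i2)
      then have "\<Theta>' x \<in> Dmod weylA3 m" using memD by simp
      then show "x \<in> \<Theta> ` Dmod weylA3 m" using i2[of x] by (metis image_eqI)
    qed
  qed
  have DD': "Dmod weylA3 m = \<Theta>' ` Dmod A' m'"
    unfolding DD image_image i1 by simp
  show ?thesis
  proof
    assume "free_multiarr weylA3 m"
    then obtain B where B: "B \<subseteq> Dmod weylA3 m" "M.independent B" "M.span B = Dmod weylA3 m"
      unfolding free_multiarr_def by blast
    show "free_multiarr A' m'" unfolding free_multiarr_def
      by (rule free_transport[OF rs rt st1 ts1 Tadd Tsc i1 i2 DD B])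
  next
    assume "free_multiarr A' m'"
    then obtain B where B: "B \<subseteq> Dmod A' m'" "M.independent B" "M.span B = Dmod A' m'"
      unfolding free_multiarr_def by blast
    show "free_multiarr weylA3 m" unfolding free_multiarr_def
      by (rule free_transport[OF rt rs ts1 st1 T'add T'sc i2 i1 DD' B])
  qed
qed


end
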